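(* Let $U$ be a countably infinite universe, $\mathcal{C}=(L_1,L_2,\ldots)$ a countably infinite collection of languages over $U$, $\mathcal{A}=\{A_g\}_{g\in[K]}$ a partition of $U$ into finitely many groups, $\alpha\in[0,1]$, let $m^\star_\alpha(L_i)$ be computed by the Representative Procedure in the context, and fix a non-decreasing $f:\mathbb{N}\to\mathbb{N}$ with $\lim_{t\to\infty}f(t)=\infty$. Then the Representative Algorithm in the context (with this $f$) generates non-uniformly with $\alpha$-representation from $\mathcal{C}$ with generation times $t^\star_\alpha(L_i)=\max(g(i),m^\star_\alpha(L_i)+1)$, where $g(i)$ is the smallest $j$ with $f(j)\ge i$: that is, for every $i$ and every enumeration of $L_i$, $\Pr_{x\sim\mathcal{G}_t}[x\in L_i\setminus S_t]=1$ for all $t$ with $|S_t|\ge t^\star_\alpha(L_i)$, and the algorithm is $\alpha$-representative with respect to $S_t$ at every $t\ge1$.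
   Context: A language is an infinite subset of $U$; a collection is a sequence of languages (repetitions allowed, entries distinguished by index). An enumeration of a language $L$ is a sequence $x_1,x_2,\ldots$ with every $x_t\in L$ and every $x\in L$ equal to some $x_t$. $S_t$ is the set of distinct strings among $x_1,\ldots,x_t$. Here a generating algorithm outputs at each time $t$ a probability distribution $\mathcal{G}_t$ on $U$. For a finite nonempty $T\subseteq U$, $\mathrm{emp}_T$ is the uniform distribution on $T$, and $\mathrm{emp}_t=\mathrm{emp}_{S_t}$. For a distribution $D$ on $U$, $D^{\mathcal{A}}(g)=\Pr_{x\sim D}[x\in A_g]$ for $g\in[K]$. The generator is $\alpha$-representative at time $t$ with respect to $S_t$ if $\max_{g\in[K]}|\mathrm{emp}_t^{\mathcal{A}}(g)-\mathcal{G}_t^{\mathcal{A}}(g)|\le\alpha$. Scarce groups: for a collection $\mathcal{D}$ of languages and finite $T\subseteq U$, let $B=\{g\in[K]: A_g\cap((\bigcap_{L\in\mathcal{D}}L)\setminus T)=\emptyset\}$. $T$ suffers group scarcity (w.r.t. $\mathcal{D}$ and $\mathcal{A}$) if some $g\in B$ has $\mathrm{emp}_T^{\mathcal{A}}(g)>\alpha$, or $\sum_{g\in B}\mathrm{emp}_T^{\mathcal{A}}(g)>\alpha(K-|B|)$. Representative Procedure. Set $\mathcal{C}'_0=()$. For $i=1,2,\ldots$: append $L_i$ to the end of $\mathcal{C}'_{i-1}$ to get $\mathcal{C}'_i=(L'_1,\ldots,L'_i)$, set $j=i$. Repeat: (i) let $T$ be a finite (nonempty) set of largest size for which there is a subcollection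 $\mathcal{D}$ of the entries $(L'_1,\ldots,L'_j)$ including $L'_j$, with $T\subseteq L$ for every $L\in\mathcal{D}$ and $T$ suffering group scarcity w.r.t. $\mathcal{D}$ and $\mathcal{A}$; $m_{\mathrm{chk}}=|T|$ ($0$ if no such $T$ exists). (ii) If $j\le1$ or $m_{\mathrm{chk}}>m^\star_\alpha(L'_{j-1})$, stop. (iii) Otherwise swap positions $j-1,j$, set $j\leftarrow j-1$, return to (i). On stopping, set $m^\star_\alpha(L_i)=m_{\mathrm{chk}}$. Representative Algorithm (parameter $f$). At time $t$, run the first $f(t)$ iterations of the Representative Procedure to get $\mathcal{C}'_{f(t)}=(L'_1,\ldots,L'_{f(t)})$. Initialize $I_t=()$; for $j=1,\ldots,f(t)$ in order: if $S_t\subseteq L'_j$ and $S_t$ does not suffer group scarcity w.r.t. $I_t\cup\{L'_j\}$ and $\mathcal{A}$, append $L'_j$ to $I_t$. If $I_t$ is empty, set $\mathcal{G}_t=\mathrm{emp}_t$. Otherwise let $B$ be the scarce groups w.r.t. $I_t$ and $S_t$; for each $g\in[K]\setminus B$ pick some $s_g\in A_g\cap((\bigcap_{L\in I_t}L)\setminus S_t)$, and set $\mathcal{G}_t(s_g)=\mathrm{emp}_t^{\mathcal{A}}(g)+\frac{1}{K-|B|}\sum_{h\in B}\mathrm{emp}_t^{\mathcal{A}}(h)$, with $\mathcal{G}_t(x)=0$ for all other $x$. *)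

theory Defs
  imports "HOL-Probability.Probability"
begin

text \<open>Groups are indexed by 1..K; languages of the collection by 1,2,... (index 0 unused);
  times t start at 1 and S_t = x ` {1..t}.\<close>

definition enumerates :: "'u set \<Rightarrow> (nat \<Rightarrow> 'u) \<Rightarrow> bool" where
  "enumerates L x \<longleftrightarrow> (\<forall>t\<ge>1. x t \<in> L) \<and> (\<forall>y\<in>L. \<exists>t\<ge>1. x t = y)"

definition empT :: "'u set \<Rightarrow> 'u set \<Rightarrow> real" where
  "empT Ag T = real (card (T \<inter> Ag)) / real (card T)"

definition scarce_groups :: "nat \<Rightarrow> (nat \<Rightarrow> 'u set) \<Rightarrow> 'u set set \<Rightarrow> 'u set \<Rightarrow> nat set" where
  "scarce_groups K A D T = {g \<in> {1..K}. A g \<inter> (\<Inter>D - T) = {}}"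

definition suffers_scarcity ::
  "nat \<Rightarrow> (nat \<Rightarrow> 'u set) \<Rightarrow> real \<Rightarrow> 'u set set \<Rightarrow> 'u set \<Rightarrow> bool" where
  "suffers_scarcity K A \<alpha> D T =
     (let B = scarce_groups K A D T in
        (\<exists>g\<in>B. empT (A g) T > \<alpha>) \<or>
        (\<Sum>g\<in>B. empT (A g) T) > \<alpha> * (real K - real (card B)))"

text \<open>m_chk for the current ordering xs (list of language indices) and 1-based position j:
  supremum (in enat, possibly infinite) of sizes of nonempty finite T contained in all members
  of a subcollection of entries 1..j containing entry j and suffering group scarcity; 0 if none.\<close>
definition mchk :: "(nat \<Rightarrow> 'u set) \<Rightarrow> nat \<Rightarrow> (nat \<Rightarrow> 'u set) \<Rightarrow> real \<Rightarrow> nat list \<Rightarrow> nat \<Rightarrow> enat" where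
  "mchk L K A \<alpha> xs j = Sup {enat (card T) | T. finite T \<and> T \<noteq> {} \<and>
      (\<exists>P. P \<subseteq> {..<j} \<and> j - 1 \<in> P \<and> T \<subseteq> \<Inter>((\<lambda>k. L (xs ! k)) ` P) \<and>
           suffers_scarcity K A \<alpha> ((\<lambda>k. L (xs ! k)) ` P) T)}"

text \<open>The swap loop of one iteration; m gives m* of previously inserted languages.
  Returns the new ordering and m_chk on stopping.\<close>
function insert_loop :: "(nat \<Rightarrow> 'u set) \<Rightarrow> nat \<Rightarrow> (nat \<Rightarrow> 'u set) \<Rightarrow> real \<Rightarrow> (nat \<Rightarrow> enat)
    \<Rightarrow> nat list \<Rightarrow> nat \<Rightarrow> nat list \<times> enat" where
  "insert_loop L K A \<alpha> m xs j =
     (let mc = mchk L K A \<alpha> xs j in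
      if j \<le> 1 \<or> mc > m (xs ! (j - 2)) then (xs, mc)
      else insert_loop L K A \<alpha> m (xs[j - 2 := xs ! (j - 1), j - 1 := xs ! (j - 2)]) (j - 1))"
  by pat_completeness auto
termination by (relation "Wellfounded.measure (\<lambda>(_, _, _, _, _, _, j). j)") auto

text \<open>First n iterations of the Representative Procedure: ordering C'_n (as indices) and m*.\<close>
primrec rep_proc :: "(nat \<Rightarrow> 'u set) \<Rightarrow> nat \<Rightarrow> (nat \<Rightarrow> 'u set) \<Rightarrow> real \<Rightarrow> nat
    \<Rightarrow> nat list \<times> (nat \<Rightarrow> enat)" where
  "rep_proc L K A \<alpha> 0 = ([], (\<lambda>_. 0))"
| "rep_proc L K A \<alpha> (Suc n) =
     (let (xs, m) = rep_proc L K A \<alpha> n;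
          r = insert_loop L K A \<alpha> m (xs @ [Suc n]) (Suc n)
      in (fst r, m(Suc n := snd r)))"

definition mstar :: "(nat \<Rightarrow> 'u set) \<Rightarrow> nat \<Rightarrow> (nat \<Rightarrow> 'u set) \<Rightarrow> real \<Rightarrow> nat \<Rightarrow> enat" where
  "mstar L K A \<alpha> i = snd (rep_proc L K A \<alpha> i) i"

definition rep_I :: "(nat \<Rightarrow> 'u set) \<Rightarrow> nat \<Rightarrow> (nat \<Rightarrow> 'u set) \<Rightarrow> real \<Rightarrow> nat list \<Rightarrow> 'u set
    \<Rightarrow> nat list" where
  "rep_I L K A \<alpha> xs S = foldl (\<lambda>I k. if S \<subseteq> L k \<and> \<not> suffers_scarcity K A \<alpha> (L ` set (I @ [k])) S
                                     then I @ [k] else I) [] xs"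

text \<open>G is a possible output of the Representative Algorithm when it runs n = f(t) iterations
  and the current sample set is S (any admissible choice of the s_g).\<close>
definition rep_alg_output :: "(nat \<Rightarrow> 'u set) \<Rightarrow> nat \<Rightarrow> (nat \<Rightarrow> 'u set) \<Rightarrow> real \<Rightarrow> nat \<Rightarrow> 'u set
    \<Rightarrow> 'u pmf \<Rightarrow> bool" where
  "rep_alg_output L K A \<alpha> n S G =
     (let I = rep_I L K A \<alpha> (fst (rep_proc L K A \<alpha> n)) S in
      if I = [] then G = pmf_of_set S
      else (let D = L ` set I; B = scarce_groups K A D S in
        \<exists>s. (\<forall>g\<in>{1..K} - B. s g \<in> A g \<inter> (\<Inter>D - S)) \<and>
            (\<forall>y. pmf G y = (\<Sum>g\<in>{1..K} - B. if s g = y then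
                 empT (A g) S + (\<Sum>h\<in>B. empT (A h) S) / (real K - real (card B)) else 0))))"

end

theory Submission
  imports Defs
begin

declare insert_loop.simps[simp del]

definition InvAt :: "(nat \<Rightarrow> 'u set) \<Rightarrow> nat \<Rightarrow> (nat \<Rightarrow> 'u set) \<Rightarrow> real \<Rightarrow> nat list \<Rightarrow> (nat \<Rightarrow> enat) \<Rightarrow> nat \<Rightarrow> bool" where
  "InvAt L K A \<alpha> xs m p \<longleftrightarrow> (\<forall>M T. M \<subseteq> set (take (Suc p) xs) \<and> xs ! p \<in> M \<and> finite T \<and> T \<noteq> {}
      \<and> T \<subseteq> \<Inter>(L ` M) \<and> suffers_scarcity K A \<alpha> (L ` M) T \<longrightarrow> enat (card T) \<le> m (xs ! p))"

lemma mchk_ge: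
  assumes "1 \<le> j" "j \<le> length xs" "M \<subseteq> set (take j xs)" "xs ! (j - 1) \<in> M" "finite T" "T \<noteq> {}"
    "T \<subseteq> \<Inter>(L ` M)" "suffers_scarcity K A \<alpha> (L ` M) T"
  shows "enat (card T) \<le> mchk L K A \<alpha> xs j"
proof -
  define P where "P = {k. k < j \<and> xs ! k \<in> M}"
  have img: "(\<lambda>k. L (xs ! k)) ` P = L ` M"
  proof
    show "(\<lambda>k. L (xs ! k)) ` P \<subseteq> L ` M" unfolding P_def by auto
    show "L ` M \<subseteq> (\<lambda>k. L (xs ! k)) ` P"
    proof
      fix z assume "z \<in> L ` M"
      then obtain y where y: "y \<in> M" "z = L y" by auto
      then have "y \<in> set (take j xs)" using assms(3) by auto
      then obtain k where "k < length (take j xs)" "take j xs ! k = y" by (auto simp: in_set_conv_nth)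
      then have "k < j" "xs ! k = y" by auto
      then show "z \<in> (\<lambda>k. L (xs ! k)) ` P" unfolding P_def using y by auto
    qed
  qed
  have PP: "P \<subseteq> {..<j}" "j - 1 \<in> P" using assms unfolding P_def by auto
  have "\<exists>P. P \<subseteq> {..<j} \<and> j - 1 \<in> P \<and> T \<subseteq> \<Inter>((\<lambda>k. L (xs ! k)) ` P) \<and>
           suffers_scarcity K A \<alpha> ((\<lambda>k. L (xs ! k)) ` P) T"
    apply (rule exI[of _ P]) using PP img assms(7,8) by simp
  then have "enat (card T) \<in> {enat (card T) | T. finite T \<and> T \<noteq> {} \<and>
      (\<exists>P. P \<subseteq> {..<j} \<and> j - 1 \<in> P \<and> T \<subseteq> \<Inter>((\<lambda>k. L (xs ! k)) ` P) \<and>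
           suffers_scarcity K A \<alpha> ((\<lambda>k. L (xs ! k)) ` P) T)}"
    using assms(5,6) by blast
  then show ?thesis unfolding mchk_def by (rule Sup_upper)
qed

lemma loop:
  "insert_loop L K A \<alpha> m xs j = (xs', mc) \<Longrightarrow> distinct xs \<Longrightarrow> 1 \<le> j \<Longrightarrow> j \<le> length xs \<Longrightarrow>
   xs ! (j - 1) = new \<Longrightarrow> (\<forall>p<length xs. p \<noteq> j - 1 \<longrightarrow> InvAt L K A \<alpha> xs m p) \<Longrightarrow>
   distinct xs' \<and> set xs' = set xs \<and> length xs' = length xs \<and>
   (\<forall>p<length xs'. InvAt L K A \<alpha> xs' (m(new := mc)) p)"
proof (induction L K A \<alpha> m xs j rule: insert_loop.induct)
  case (1 L K A \<alpha> m xs j)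
  define mc0 where "mc0 = mchk L K A \<alpha> xs j"
  show ?case
  proof (cases "j \<le> 1 \<or> mc0 > m (xs ! (j - 2))")
    case True
    then have "insert_loop L K A \<alpha> m xs j = (xs, mc0)"
      by (subst insert_loop.simps) (simp add: mc0_def Let_def)
    then have eq: "xs' = xs" "mc = mc0" using "1.prems"(1) by simp_all
    have "InvAt L K A \<alpha> xs (m(new := mc0)) p" if "p < length xs" for p
    proof (cases "p = j - 1")
      case True
      show ?thesis unfolding InvAt_def
      proof (intro allI impI, elim conjE)
        fix M T assume M: "M \<subseteq> set (take (Suc p) xs)" "xs ! p \<in> M" "finite T" "T \<noteq> {}"
              "T \<subseteq> \<Inter>(L ` M)" "suffers_scarcity K A \<alpha> (L ` M) T"
        have "Suc p = j" using True "1.prems" by simp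
        then have "enat (card T) \<le> mc0" unfolding mc0_def
          using mchk_ge[of j xs M T L K A \<alpha>] M "1.prems" True by simp
        then show "enat (card T) \<le> (m(new := mc0)) (xs ! p)" using True "1.prems" by simp
      qed
    next
      case False
      then have "xs ! p \<noteq> new" using "1.prems" that by (auto simp: nth_eq_iff_index_eq)
      then show ?thesis using "1.prems"(6) that False unfolding InvAt_def by auto
    qed
    then show ?thesis unfolding eq using "1.prems"(2) by blast
  next
    case False
    define xs1 where "xs1 = xs[j - 2 := xs ! (j - 1), j - 1 := xs ! (j - 2)]"
    have j2: "j \<ge> 2" using False by auto
    have rec: "insert_loop L K A \<alpha> m xs1 (j - 1) = (xs', mc)"
      using "1.prems"(1) False insert_loop.simps[of L K A \<alpha> m xs j] by (simp add: mc0_def xs1_def Let_def)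
    have len: "length xs1 = length xs" by (simp add: xs1_def)
    have d1: "distinct xs1" unfolding xs1_def
      by (rule distinct_swap[THEN iffD2]) (use "1.prems" j2 in auto)
    have s1: "set xs1 = set xs" unfolding xs1_def
      by (rule set_swap) (use "1.prems" j2 in auto)
    have jj: "j - 1 - 1 = j - 2" by arith
    have n1: "xs1 ! (j - 1 - 1) = new" unfolding jj using "1.prems" j2 by (simp add: xs1_def nth_list_update)
    have inv1: "\<forall>p<length xs1. p \<noteq> j - 1 - 1 \<longrightarrow> InvAt L K A \<alpha> xs1 m p"
    proof (intro allI impI)
      fix p assume p: "p < length xs1" "p \<noteq> j - 1 - 1"
      show "InvAt L K A \<alpha> xs1 m p"
      proof (cases "p < j - 2")
        case True
        have "take (Suc p) xs1 = take (Suc p) xs" using True by (simp add: xs1_def)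
        moreover have "xs1 ! p = xs ! p" using True by (simp add: xs1_def nth_list_update)
        moreover have "InvAt L K A \<alpha> xs m p" using "1.prems"(6) p len True by auto
        ultimately show ?thesis unfolding InvAt_def by simp
      next
        case False
        then have pj: "p \<ge> j - 1" using p by auto
        have tq: "take (Suc p) xs1 = (take (Suc p) xs)[j-2 := take (Suc p) xs ! (j-1), j-1 := take (Suc p) xs ! (j-2)]"
          using pj j2 by (simp add: xs1_def take_update_swap)
        have st: "set (take (Suc p) xs1) = set (take (Suc p) xs)"
          unfolding tq by (rule set_swap) (use pj p len j2 in auto)
        show ?thesis
        proof (cases "p = j - 1")
          case False
          then have "xs1 ! p = xs ! p" using pj by (simp add: xs1_def nth_list_update)
          moreover have "InvAt L K A \<alpha> xs m p" using "1.prems"(6) p len False by auto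
          ultimately show ?thesis using st unfolding InvAt_def by simp
        next
          case True
          have l: "xs1 ! p = xs ! (j - 2)" using True j2 "1.prems" by (simp add: xs1_def nth_list_update)
          have mc_le: "mc0 \<le> m (xs ! (j - 2))" using \<open>\<not> (j \<le> 1 \<or> mc0 > m (xs ! (j - 2)))\<close> by auto
          have invj2: "InvAt L K A \<alpha> xs m (j - 2)" using "1.prems"(6) j2 "1.prems"(4) by auto
          show ?thesis unfolding InvAt_def
          proof (intro allI impI, elim conjE)
            fix M T assume M: "M \<subseteq> set (take (Suc p) xs1)" "xs1 ! p \<in> M" "finite T" "T \<noteq> {}"
              "T \<subseteq> \<Inter>(L ` M)" "suffers_scarcity K A \<alpha> (L ` M) T"
            show "enat (card T) \<le> m (xs1 ! p)"
            proof (cases "new \<in> M")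
              case True
              have pj1: "p = j - 1" by fact
              have Mj: "M \<subseteq> set (take j xs)" using M(1) st pj1 j2 by simp
              have nj: "xs ! (j - 1) \<in> M" using True "1.prems"(5) by simp
              have "enat (card T) \<le> mc0" unfolding mc0_def
                by (rule mchk_ge[OF _ "1.prems"(4) Mj nj M(3) M(4) M(5) M(6)]) (use j2 in simp)
              then show ?thesis using mc_le l by auto
            next
              case False
              have e1: "Suc (j - 2) = j - 1" "Suc (j - 1) = j" using j2 by arith+
              have "take (Suc (j - 1)) xs = take (j - 1) xs @ [xs ! (j - 1)]"
                by (rule take_Suc_conv_app_nth) (use j2 "1.prems"(4) in arith)
              then have tk: "take (Suc p) xs = take (Suc (j - 2)) xs @ [xs ! (j - 1)]"
                using \<open>p = j - 1\<close> e1 by simp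
              have "M \<subseteq> set (take (Suc (j - 2)) xs)" using M(1) st tk False "1.prems"(5) by auto
              then show ?thesis using invj2 M l unfolding InvAt_def by auto
            qed
          qed
        qed
      qed
    qed
    have "distinct xs' \<and> set xs' = set xs1 \<and> length xs' = length xs1 \<and>
      (\<forall>p<length xs'. InvAt L K A \<alpha> xs' (m(new := mc)) p)"
    proof (rule "1.IH"[OF mc0_def, folded xs1_def, OF _ rec d1 _ _ n1 inv1])
      show "\<not> (j \<le> 1 \<or> m (xs ! (j - 2)) < mc0)" using False by simp
      show "1 \<le> j - 1" using j2 by simp
      show "j - 1 \<le> length xs1" using len "1.prems"(4) by simp
    qed
    then show ?thesis unfolding s1 len .
  qed
qed


lemma rep_proc_inv:
  "distinct (fst (rep_proc L K A \<alpha> n)) \<and> set (fst (rep_proc L K A \<alpha> n)) = {1..n} \<and>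
   length (fst (rep_proc L K A \<alpha> n)) = n \<and>
   (\<forall>p<n. InvAt L K A \<alpha> (fst (rep_proc L K A \<alpha> n)) (snd (rep_proc L K A \<alpha> n)) p)"
proof (induction n)
  case 0
  show ?case by simp
next
  case (Suc n)
  obtain xs m where xm: "rep_proc L K A \<alpha> n = (xs, m)" by (cases "rep_proc L K A \<alpha> n")
  obtain xs' mc where r: "insert_loop L K A \<alpha> m (xs @ [Suc n]) (Suc n) = (xs', mc)"
    by (cases "insert_loop L K A \<alpha> m (xs @ [Suc n]) (Suc n)")
  have rp: "rep_proc L K A \<alpha> (Suc n) = (xs', m(Suc n := mc))" using xm r by simp
  have ih: "distinct xs" "set xs = {1..n}" "length xs = n" "\<forall>p<n. InvAt L K A \<alpha> xs m p"
    using Suc.IH xm by simp_all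
  have "distinct xs' \<and> set xs' = set (xs @ [Suc n]) \<and> length xs' = length (xs @ [Suc n]) \<and>
     (\<forall>p<length xs'. InvAt L K A \<alpha> xs' (m(Suc n := mc)) p)"
  proof (rule loop[OF r])
    show "distinct (xs @ [Suc n])" using ih by simp
    show "1 \<le> Suc n" by simp
    show "Suc n \<le> length (xs @ [Suc n])" using ih by simp
    show "(xs @ [Suc n]) ! (Suc n - 1) = Suc n" using ih by (simp add: nth_append)
    show "\<forall>p<length (xs @ [Suc n]). p \<noteq> Suc n - 1 \<longrightarrow> InvAt L K A \<alpha> (xs @ [Suc n]) m p"
    proof (intro allI impI)
      fix p assume p: "p < length (xs @ [Suc n])" "p \<noteq> Suc n - 1"
      then have pn: "p < n" using ih by simp
      have "take (Suc p) (xs @ [Suc n]) = take (Suc p) xs" using pn ih by simp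
      moreover have "(xs @ [Suc n]) ! p = xs ! p" using pn ih by (simp add: nth_append)
      moreover have "InvAt L K A \<alpha> xs m p" using ih pn by simp
      ultimately show "InvAt L K A \<alpha> (xs @ [Suc n]) m p" unfolding InvAt_def by simp
    qed
  qed
  moreover have sx: "set (xs @ [Suc n]) = {1..Suc n}" using ih by auto
  moreover have lx: "length (xs @ [Suc n]) = Suc n" using ih by simp
  ultimately have X: "distinct xs'" "set xs' = {1..Suc n}" "length xs' = Suc n"
    and Y: "\<forall>p<length xs'. InvAt L K A \<alpha> xs' (m(Suc n := mc)) p" by auto
  show ?case unfolding rp prod.sel using X Y[unfolded X(3)] by blast
qed

lemma rep_proc_m: "l \<le> n \<Longrightarrow> snd (rep_proc L K A \<alpha> n) l = mstar L K A \<alpha> l"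
proof (induction n)
  case 0
  then show ?case by (simp add: mstar_def)
next
  case (Suc n)
  show ?case
  proof (cases "l = Suc n")
    case True
    then show ?thesis by (simp add: mstar_def)
  next
    case False
    obtain xs m where xm: "rep_proc L K A \<alpha> n = (xs, m)" by (cases "rep_proc L K A \<alpha> n")
    have "snd (rep_proc L K A \<alpha> (Suc n)) l = m l" using xm False by (simp add: Let_def)
    also have "\<dots> = mstar L K A \<alpha> l" using Suc False xm by simp
    finally show ?thesis .
  qed
qed

definition stp :: "(nat \<Rightarrow> 'u set) \<Rightarrow> nat \<Rightarrow> (nat \<Rightarrow> 'u set) \<Rightarrow> real \<Rightarrow> 'u set \<Rightarrow> nat list \<Rightarrow> nat \<Rightarrow> nat list" where
  "stp L K A \<alpha> S I k = (if S \<subseteq> L k \<and> \<not> suffers_scarcity K A \<alpha> (L ` set (I @ [k])) S then I @ [k] else I)"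

lemma rep_I_stp: "rep_I L K A \<alpha> xs S = foldl (stp L K A \<alpha> S) [] xs"
  unfolding rep_I_def stp_def by simp

lemma fold_prefix: "\<exists>J. foldl (stp L K A \<alpha> S) I0 ys = I0 @ J \<and> set J \<subseteq> set ys"
proof (induction ys arbitrary: I0)
  case Nil
  show ?case by simp
next
  case (Cons y ys)
  obtain J where J: "foldl (stp L K A \<alpha> S) (stp L K A \<alpha> S I0 y) ys = stp L K A \<alpha> S I0 y @ J" "set J \<subseteq> set ys"
    using Cons.IH by blast
  show ?case
  proof (cases "S \<subseteq> L y \<and> \<not> suffers_scarcity K A \<alpha> (L ` set (I0 @ [y])) S")
    case True
    then have "stp L K A \<alpha> S I0 y = I0 @ [y]" by (simp add: stp_def)
    then show ?thesis using J by (intro exI[of _ "y # J"]) auto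
  next
    case False
    then have "stp L K A \<alpha> S I0 y = I0" by (simp add: stp_def)
    then show ?thesis using J by (intro exI[of _ J]) auto
  qed
qed

lemma fold_sub: "\<forall>k\<in>set I0. S \<subseteq> L k \<Longrightarrow> \<forall>k\<in>set (foldl (stp L K A \<alpha> S) I0 ys). S \<subseteq> L k"
proof (induction ys arbitrary: I0)
  case Nil
  then show ?case by simp
next
  case (Cons y ys)
  have "\<forall>k\<in>set (stp L K A \<alpha> S I0 y). S \<subseteq> L k" using Cons.prems by (auto simp: stp_def)
  then show ?case using Cons.IH by simp
qed

lemma fold_ns: "I0 = [] \<or> \<not> suffers_scarcity K A \<alpha> (L ` set I0) S \<Longrightarrow>
  foldl (stp L K A \<alpha> S) I0 ys = [] \<or> \<not> suffers_scarcity K A \<alpha> (L ` set (foldl (stp L K A \<alpha> S) I0 ys)) S"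
proof (induction ys arbitrary: I0)
  case Nil
  then show ?case by simp
next
  case (Cons y ys)
  have "stp L K A \<alpha> S I0 y = [] \<or> \<not> suffers_scarcity K A \<alpha> (L ` set (stp L K A \<alpha> S I0 y)) S"
    using Cons.prems by (auto simp: stp_def)
  then show ?case using Cons.IH by simp
qed

lemma pmf_calc:
  fixes G :: "'u pmf" and s :: "nat \<Rightarrow> 'u"
  assumes fin: "finite Gs" and Gs: "Gs \<subseteq> {1..K}" and s: "\<forall>g\<in>Gs. s g \<in> A g"
    and disj: "\<forall>g\<in>{1..K}. \<forall>h\<in>{1..K}. g \<noteq> h \<longrightarrow> A g \<inter> A h = {}"
    and pm: "\<forall>y. pmf G y = (\<Sum>g\<in>Gs. if s g = y then w g else 0)"
  shows "set_pmf G \<subseteq> s ` Gs"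
    and "g0 \<in> {1..K} \<Longrightarrow> measure_pmf.prob G (A g0) = (if g0 \<in> Gs then w g0 else 0)"
proof -
  show sp: "set_pmf G \<subseteq> s ` Gs"
  proof
    fix y assume "y \<in> set_pmf G"
    then have "pmf G y \<noteq> 0" by (simp add: set_pmf_eq)
    then have "(\<Sum>g\<in>Gs. if s g = y then w g else 0) \<noteq> 0" using pm by simp
    then obtain g where "g \<in> Gs" "(if s g = y then w g else 0) \<noteq> 0"
      using sum.neutral[of Gs "\<lambda>g. if s g = y then w g else 0"] by blast
    then show "y \<in> s ` Gs" by (auto split: if_splits)
  qed
  assume g0: "g0 \<in> {1..K}"
  have key: "g = g0" if "g \<in> Gs" "s g \<in> A g0" for g
  proof (rule ccontr)
    assume "g \<noteq> g0"
    then have "A g \<inter> A g0 = {}" using disj g0 Gs that(1) by blast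
    then show False using s that by blast
  qed
  have e1: "(A g0 \<inter> s ` Gs) \<inter> set_pmf G = A g0 \<inter> set_pmf G" using sp by blast
  have "measure_pmf.prob G (A g0) = measure_pmf.prob G (A g0 \<inter> set_pmf G)"
    by (rule measure_Int_set_pmf[symmetric])
  also have "\<dots> = measure_pmf.prob G ((A g0 \<inter> s ` Gs) \<inter> set_pmf G)" by (simp only: e1)
  also have "\<dots> = measure_pmf.prob G (A g0 \<inter> s ` Gs)" by (rule measure_Int_set_pmf)
  also have "\<dots> = sum (pmf G) (A g0 \<inter> s ` Gs)"
    by (rule measure_measure_pmf_finite) (use fin in simp)
  also have "A g0 \<inter> s ` Gs = (if g0 \<in> Gs then {s g0} else {})"
  proof (cases "g0 \<in> Gs")
    case True
    have "A g0 \<inter> s ` Gs = {s g0}"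
    proof
      show "A g0 \<inter> s ` Gs \<subseteq> {s g0}" using key by blast
      show "{s g0} \<subseteq> A g0 \<inter> s ` Gs" using s True by blast
    qed
    then show ?thesis using True by simp
  next
    case False
    have "A g0 \<inter> s ` Gs = {}" using key False by blast
    then show ?thesis using False by simp
  qed
  also have "sum (pmf G) (if g0 \<in> Gs then {s g0} else {}) = (if g0 \<in> Gs then w g0 else 0)"
  proof (cases "g0 \<in> Gs")
    case True
    have "pmf G (s g0) = (\<Sum>g\<in>Gs. if s g = s g0 then w g else 0)" using pm by simp
    also have "\<dots> = (\<Sum>g\<in>Gs. if g = g0 then w g else 0)"
      using key s True by (intro sum.cong) auto
    also have "\<dots> = w g0" using True fin by simp
    finally show ?thesis using True by simp
  qed simp
  finally show "measure_pmf.prob G (A g0) = (if g0 \<in> Gs then w g0 else 0)" .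
qed

lemma empT_nonneg: "0 \<le> empT X T" unfolding empT_def by simp

lemma output_facts:
  fixes G :: "'u pmf"
  assumes out: "rep_alg_output L K A \<alpha> n S G" and finS: "finite S" and neS: "S \<noteq> {}"
    and disj: "\<forall>g\<in>{1..K}. \<forall>h\<in>{1..K}. g \<noteq> h \<longrightarrow> A g \<inter> A h = {}"
    and a0: "0 \<le> \<alpha>"
  shows "\<forall>g\<in>{1..K}. \<bar>empT (A g) S - measure_pmf.prob G (A g)\<bar> \<le> \<alpha>"
    and "i \<in> set (rep_I L K A \<alpha> (fst (rep_proc L K A \<alpha> n)) S) \<Longrightarrow> measure_pmf.prob G (L i - S) = 1"
proof -
  define I where "I = rep_I L K A \<alpha> (fst (rep_proc L K A \<alpha> n)) S"
  define D where "D = L ` set I"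
  define B where "B = scarce_groups K A D S"
  define Gs where "Gs = {1..K} - B"
  define c where "c = (\<Sum>h\<in>B. empT (A h) S) / (real K - real (card B))"
  have ns: "I = [] \<or> \<not> suffers_scarcity K A \<alpha> D S"
    unfolding D_def I_def rep_I_stp by (rule fold_ns) simp
  have Bsub: "B \<subseteq> {1..K}" unfolding B_def scarce_groups_def by auto
  then have cardB: "card B \<le> K" using card_mono[of "{1..K}" B] by simp
  have ne_case: "\<exists>s. (\<forall>g\<in>Gs. s g \<in> A g \<inter> (\<Inter>D - S)) \<and>
        (\<forall>y. pmf G y = (\<Sum>g\<in>Gs. if s g = y then empT (A g) S + c else 0))" if "I \<noteq> []"
    using out that unfolding rep_alg_output_def Let_def I_def[symmetric] D_def[symmetric]
      B_def[symmetric] Gs_def[symmetric] c_def[symmetric] by simp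
  show "\<forall>g\<in>{1..K}. \<bar>empT (A g) S - measure_pmf.prob G (A g)\<bar> \<le> \<alpha>"
  proof (cases "I = []")
    case True
    then have "G = pmf_of_set S" using out unfolding rep_alg_output_def Let_def I_def by simp
    then show ?thesis using finS neS a0 by (simp add: measure_pmf_of_set empT_def Int_commute)
  next
    case False
    then obtain s where s: "\<forall>g\<in>Gs. s g \<in> A g \<inter> (\<Inter>D - S)"
      and pm: "\<forall>y. pmf G y = (\<Sum>g\<in>Gs. if s g = y then empT (A g) S + c else 0)"
      using ne_case by blast
    have nsc: "\<not> suffers_scarcity K A \<alpha> D S" using ns False by simp
    then have nB: "\<forall>g\<in>B. empT (A g) S \<le> \<alpha>" and sB: "(\<Sum>g\<in>B. empT (A g) S) \<le> \<alpha> * (real K - real (card B))"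
      unfolding suffers_scarcity_def Let_def B_def by (auto simp: not_less)
    have c0: "0 \<le> c" unfolding c_def using cardB by (intro divide_nonneg_nonneg sum_nonneg) (auto simp: empT_nonneg)
    have ca: "c \<le> \<alpha>"
    proof (cases "real K - real (card B) = 0")
      case True
      then show ?thesis unfolding c_def using a0 by simp
    next
      case False
      then have "real K - real (card B) > 0" using cardB by simp
      then show ?thesis unfolding c_def using sB by (simp add: divide_le_eq mult.commute)
    qed
    have pc: "measure_pmf.prob G (A g0) = (if g0 \<in> Gs then empT (A g0) S + c else 0)" if "g0 \<in> {1..K}" for g0
      by (rule pmf_calc(2)[OF _ _ _ disj pm that]) (use s in \<open>auto simp: Gs_def\<close>)
    show ?thesis
    proof
      fix g assume g: "g \<in> {1..K}"
      show "\<bar>empT (A g) S - measure_pmf.prob G (A g)\<bar> \<le> \<alpha>"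
      proof (cases "g \<in> Gs")
        case True
        then show ?thesis using pc[OF g] c0 ca by simp
      next
        case False
        then have "g \<in> B" using g Gs_def by simp
        then show ?thesis using pc[OF g] False nB empT_nonneg[of "A g" S] by simp
      qed
    qed
  qed
  assume iI: "i \<in> set (rep_I L K A \<alpha> (fst (rep_proc L K A \<alpha> n)) S)"
  then have iI': "i \<in> set I" unfolding I_def .
  then have "I \<noteq> []" by auto
  then obtain s where s: "\<forall>g\<in>Gs. s g \<in> A g \<inter> (\<Inter>D - S)"
    and pm: "\<forall>y. pmf G y = (\<Sum>g\<in>Gs. if s g = y then empT (A g) S + c else 0)"
    using ne_case by blast
  have sp: "set_pmf G \<subseteq> s ` Gs"
    by (rule pmf_calc(1)[OF _ _ _ disj pm]) (use s in \<open>auto simp: Gs_def\<close>)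
  have "\<Inter>D \<subseteq> L i" unfolding D_def using iI' by auto
  then have sp2: "set_pmf G \<subseteq> L i - S" using sp s by blast
  have "measure_pmf.prob G (L i - S) = measure_pmf.prob G ((L i - S) \<inter> set_pmf G)"
    by (simp add: measure_Int_set_pmf)
  also have "(L i - S) \<inter> set_pmf G = UNIV \<inter> set_pmf G" using sp2 by blast
  also have "measure_pmf.prob G (UNIV \<inter> set_pmf G) = 1"
    by (simp only: measure_Int_set_pmf measure_pmf_UNIV)
  finally show "measure_pmf.prob G (L i - S) = 1" .
qed

theorem mainTheorem8:
  fixes L :: "nat \<Rightarrow> 'u set" and K :: nat and A :: "nat \<Rightarrow> 'u set" and \<alpha> :: real
    and f :: "nat \<Rightarrow> nat"
  assumes "countable (UNIV :: 'u set)" and "infinite (UNIV :: 'u set)"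
    and "\<forall>i\<ge>1. infinite (L i)"
    and "\<forall>g\<in>{1..K}. A g \<noteq> {}"
    and "\<forall>g\<in>{1..K}. \<forall>h\<in>{1..K}. g \<noteq> h \<longrightarrow> A g \<inter> A h = {}"
    and "(\<Union>g\<in>{1..K}. A g) = UNIV"
    and "0 \<le> \<alpha>" and "\<alpha> \<le> 1"
    and "mono f" and "filterlim f at_top at_top"
  shows "\<forall>i\<ge>1. \<forall>(x :: nat \<Rightarrow> 'u) (G :: nat \<Rightarrow> 'u pmf).
           enumerates (L i) x \<and> (\<forall>t\<ge>1. rep_alg_output L K A \<alpha> (f t) (x ` {1..t}) (G t)) \<longrightarrow>
           (\<forall>t\<ge>1. max (enat (LEAST j. j \<ge> 1 \<and> f j \<ge> i)) (mstar L K A \<alpha> i + 1)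
                       \<le> enat (card (x ` {1..t})) \<longrightarrow>
                    measure_pmf.prob (G t) (L i - x ` {1..t}) = 1) \<and>
           (\<forall>t\<ge>1. \<forall>g\<in>{1..K}.
              \<bar>empT (A g) (x ` {1..t}) - measure_pmf.prob (G t) (A g)\<bar> \<le> \<alpha>)"
proof (intro allI impI)
  fix i :: nat and x :: "nat \<Rightarrow> 'u" and G :: "nat \<Rightarrow> 'u pmf"
  assume i1: "i \<ge> 1"
  assume H: "enumerates (L i) x \<and> (\<forall>t\<ge>1. rep_alg_output L K A \<alpha> (f t) (x ` {1..t}) (G t))"
  have enum: "enumerates (L i) x" and out: "\<And>t. t \<ge> 1 \<Longrightarrow> rep_alg_output L K A \<alpha> (f t) (x ` {1..t}) (G t)"
    using H by auto
  have disj: "\<forall>g\<in>{1..K}. \<forall>h\<in>{1..K}. g \<noteq> h \<longrightarrow> A g \<inter> A h = {}" using assms(5) .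
  have Sfin: "finite (x ` {1..t})" for t by simp
  have Sne: "x ` {1..t} \<noteq> {}" if "t \<ge> 1" for t using that by auto
  have Ssub: "x ` {1..t} \<subseteq> L i" for t using enum unfolding enumerates_def by auto
  show "(\<forall>t\<ge>1. max (enat (LEAST j. j \<ge> 1 \<and> f j \<ge> i)) (mstar L K A \<alpha> i + 1)
                       \<le> enat (card (x ` {1..t})) \<longrightarrow>
                    measure_pmf.prob (G t) (L i - x ` {1..t}) = 1) \<and>
           (\<forall>t\<ge>1. \<forall>g\<in>{1..K}.
              \<bar>empT (A g) (x ` {1..t}) - measure_pmf.prob (G t) (A g)\<bar> \<le> \<alpha>)"
  proof (intro conjI allI impI)
    fix t :: nat assume t1: "t \<ge> 1"
    show "\<forall>g\<in>{1..K}. \<bar>empT (A g) (x ` {1..t}) - measure_pmf.prob (G t) (A g)\<bar> \<le> \<alpha>"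
      by (rule output_facts(1)[OF out[OF t1] Sfin Sne[OF t1] disj assms(7)])
  next
    fix t :: nat assume t1: "t \<ge> 1"
    define S where "S = x ` {1..t}"
    define gi where "gi = (LEAST j. j \<ge> 1 \<and> f j \<ge> i)"
    assume cond: "max (enat (LEAST j. j \<ge> 1 \<and> f j \<ge> i)) (mstar L K A \<alpha> i + 1) \<le> enat (card (x ` {1..t}))"
    then have c1: "gi \<le> card S" and c2: "mstar L K A \<alpha> i + 1 \<le> enat (card S)"
      unfolding gi_def S_def by auto
    have "card S \<le> card {1..t}" unfolding S_def by (rule card_image_le) simp
    then have git: "gi \<le> t" using c1 by simp
    have ev: "eventually (\<lambda>j. f j \<ge> i) sequentially"
      using assms(10) by (simp add: filterlim_at_top)
    then obtain N where N: "\<forall>j\<ge>N. f j \<ge> i" by (auto simp: eventually_sequentially)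
    have ex: "\<exists>j. j \<ge> 1 \<and> f j \<ge> i" using N by (intro exI[of _ "max N 1"]) auto
    have "f gi \<ge> i" unfolding gi_def using LeastI_ex[OF ex] by simp
    moreover have "f gi \<le> f t" using assms(9) git by (simp add: monoD)
    ultimately have inf: "i \<le> f t" by simp
    define n where "n = f t"
    define xs where "xs = fst (rep_proc L K A \<alpha> n)"
    define m where "m = snd (rep_proc L K A \<alpha> n)"
    have R: "distinct xs" "set xs = {1..n}" "length xs = n" "\<forall>p<n. InvAt L K A \<alpha> xs m p"
      using rep_proc_inv[of L K A \<alpha> n] unfolding xs_def m_def by auto
    have mi: "m i = mstar L K A \<alpha> i" unfolding m_def by (rule rep_proc_m) (use inf n_def in simp)
    have "i \<in> set xs" using R(2) i1 inf n_def by simp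
    then obtain p where p: "p < length xs" "xs ! p = i" by (auto simp: in_set_conv_nth)
    have xsplit: "xs = take p xs @ i # drop (Suc p) xs" using p id_take_nth_drop by metis
    define I' where "I' = foldl (stp L K A \<alpha> S) [] (take p xs)"
    obtain J where J: "I' = [] @ J" "set J \<subseteq> set (take p xs)"
      using fold_prefix[of L K A \<alpha> S "[]" "take p xs"] unfolding I'_def by blast
    have I'sub: "set I' \<subseteq> set (take p xs)" using J by simp
    have I'L: "\<forall>k\<in>set I'. S \<subseteq> L k" unfolding I'_def by (rule fold_sub) simp
    have SLi: "S \<subseteq> L i" unfolding S_def by (rule Ssub)
    have notsc: "\<not> suffers_scarcity K A \<alpha> (L ` set (I' @ [i])) S"
    proof
      assume sc: "suffers_scarcity K A \<alpha> (L ` set (I' @ [i])) S"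
      have tk: "take (Suc p) xs = take p xs @ [xs ! p]" using p by (simp add: take_Suc_conv_app_nth)
      have "set (I' @ [i]) \<subseteq> set (take (Suc p) xs)" using I'sub tk p by auto
      moreover have "xs ! p \<in> set (I' @ [i])" using p by simp
      moreover have "S \<subseteq> \<Inter>(L ` set (I' @ [i]))" using I'L SLi by auto
      ultimately have "enat (card S) \<le> m (xs ! p)"
        using R(4) p R(3) sc Sfin[of t] Sne[OF t1] unfolding InvAt_def S_def by blast
      then have "enat (card S) \<le> mstar L K A \<alpha> i" using p mi by simp
      then show False using c2 by (cases "mstar L K A \<alpha> i") (auto simp: one_enat_def)
    qed
    have st: "stp L K A \<alpha> S I' i = I' @ [i]" using notsc SLi by (simp add: stp_def)
    have "rep_I L K A \<alpha> xs S = foldl (stp L K A \<alpha> S) (I' @ [i]) (drop (Suc p) xs)"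
      unfolding rep_I_stp I'_def using st I'_def by (subst xsplit) simp
    moreover obtain J2 where "foldl (stp L K A \<alpha> S) (I' @ [i]) (drop (Suc p) xs) = (I' @ [i]) @ J2"
      using fold_prefix by blast
    ultimately have "i \<in> set (rep_I L K A \<alpha> xs S)" by simp
    then show "measure_pmf.prob (G t) (L i - x ` {1..t}) = 1"
      using output_facts(2)[OF out[OF t1] Sfin Sne[OF t1] disj assms(7)] unfolding xs_def n_def S_def
      by blast
  qed
qed

end
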